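(* Let $q,n,d,m$ be positive integers with $q\ge 2$, and let $C\subseteq[q]^n$ be a code with minimum Hamming distance at least $d$. Let $j\in\{1,\dots,n\}$ and $\alpha\in[q]$, and let $B\subseteq C$ be the set of all codewords $w\in C$ with $w_j=\alpha$. Suppose that for every coordinate $i\neq j$, every symbol of $[q]$ occurs exactly $m$ times among the entries $w_i$, $w\in B$. If $n-d$ does not divide $m(n-1)$, then for every $u\in C\setminus B$ there exists $v\in B$ with $d_H(u,v)\notin\{d,n\}$.
   Context: $[q]=\{0,1,\dots,q-1\}$. For $u,v\in[q]^n$, $d_H(u,v)$ is the number of coordinates $i$ with $u_i\neq v_i$. The minimum distance of a code is the minimum of $d_H$ over distinct codewords. *)

theory Defs
  imports Main
begin

text \<open>Words of [q]^n are lists of length n with entries in {0..<q};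
coordinates are indexed 0..n-1.\<close>

definition words :: "nat \<Rightarrow> nat \<Rightarrow> nat list set" where
  "words q n = {w. length w = n \<and> (\<forall>i<n. w ! i < q)}"

definition hamming_dist :: "nat list \<Rightarrow> nat list \<Rightarrow> nat" where
  "hamming_dist u v = card {i. i < length u \<and> u ! i \<noteq> v ! i}"

definition min_dist_ge :: "nat list set \<Rightarrow> nat \<Rightarrow> bool" where
  "min_dist_ge C d \<longleftrightarrow> (\<forall>u\<in>C. \<forall>v\<in>C. u \<noteq> v \<longrightarrow> d \<le> hamming_dist u v)"

end

theory Submission
  imports Defs
begin

lemma words_finite: "finite (words q n)"
proof -
  have "words q n \<subseteq> {xs. set xs \<subseteq> {0..<q} \<and> length xs = n}"
    by (auto simp: words_def in_set_conv_nth)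
  moreover have "finite {xs. set xs \<subseteq> {0..<q} \<and> length xs = n}"
    by (rule finite_lists_length_eq) simp
  ultimately show ?thesis by (rule finite_subset)
qed

theorem proposition5p2:
  fixes q n d m j \<alpha> :: nat and C B :: "nat list set"
  assumes "q \<ge> 2" and "n > 0" and "d > 0" and "m > 0"
    and "C \<subseteq> words q n"
    and "min_dist_ge C d"
    and "j < n" and "\<alpha> < q"
    and "B = {w \<in> C. w ! j = \<alpha>}"
    and "\<forall>i<n. i \<noteq> j \<longrightarrow> (\<forall>a<q. card {w \<in> B. w ! i = a} = m)"
    and "\<not> ((int n - int d) dvd (int m * (int n - 1)))"
  shows "\<forall>u \<in> C - B. \<exists>v \<in> B. hamming_dist u v \<notin> {d, n}"
proof (rule ballI, rule ccontr)
  fix u assume u: "u \<in> C - B" and H: "\<not> (\<exists>v \<in> B. hamming_dist u v \<notin> {d, n})"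
  have finB: "finite B" using assms(5,9) words_finite[of q n] by (auto intro: finite_subset)
  have uw: "length u = n" "\<forall>i<n. u ! i < q" using u assms(5) by (auto simp: words_def)
  have uj: "u ! j \<noteq> \<alpha>" using u assms(9) by auto
  define I where "I = {i. i < n \<and> i \<noteq> j}"
  have finI: "finite I" unfolding I_def by auto
  have cardI: "card I = n - 1"
  proof -
    have "I = {..<n} - {j}" unfolding I_def by auto
    thus ?thesis using assms(7) by simp
  qed
  define agr where "agr v = card {i \<in> I. u ! i = v ! i}" for v
  have agr_sum: "agr v = (\<Sum>i\<in>I. if u ! i = v ! i then 1 else 0)" for v
    unfolding agr_def using finI by (simp add: sum.If_cases Int_def)
  have "(\<Sum>v\<in>B. agr v) = (\<Sum>i\<in>I. \<Sum>v\<in>B. if u ! i = v ! i then 1 else (0::nat))"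
    unfolding agr_sum by (rule sum.swap)
  also have "\<dots> = (\<Sum>i\<in>I. card {v \<in> B. v ! i = u ! i})"
    using finB by (intro sum.cong refl) (simp add: sum.If_cases eq_commute Int_def)
  also have "\<dots> = (\<Sum>i\<in>I. m)"
    using assms(10) uw(2) by (intro sum.cong refl) (auto simp: I_def)
  finally have S: "(\<Sum>v\<in>B. agr v) = m * (n - 1)" using cardI by simp
  have each: "(int n - int d) dvd int (agr v)" if v: "v \<in> B" for v
  proof -
    have vl: "length v = n" using v assms(5,9) by (auto simp: words_def)
    have vj: "v ! j = \<alpha>" using v assms(9) by auto
    let ?D = "{i. i < n \<and> u ! i \<noteq> v ! i}"
    have hd: "hamming_dist u v = card ?D" unfolding hamming_dist_def using uw by simp
    have split: "{..<n} = ?D \<union> {i \<in> I. u ! i = v ! i}"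
      using uj vj assms(7) by (auto simp: I_def)
    have "n = card ?D + agr v"
      unfolding agr_def
      by (subst card_lessThan[symmetric], subst split, rule card_Un_disjoint)
         (auto simp: I_def finI)
    hence A: "int (agr v) = int n - int (hamming_dist u v)" using hd by simp
    have "hamming_dist u v \<in> {d, n}" using H v by blast
    thus ?thesis using A by auto
  qed
  have "(int n - int d) dvd (\<Sum>v\<in>B. int (agr v))" by (rule dvd_sum) (rule each)
  also have "(\<Sum>v\<in>B. int (agr v)) = int m * (int n - 1)"
  proof -
    have "(\<Sum>v\<in>B. int (agr v)) = int (\<Sum>v\<in>B. agr v)" by simp
    also have "\<dots> = int (m * (n - 1))" using S by simp
    also have "\<dots> = int m * (int n - 1)" using assms(2) by (simp add: of_nat_diff)
    finally show ?thesis .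
  qed
  finally show False using assms(11) by simp
qed

end
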